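(* Let $\Omega\subset\mathbb{R}^2$ be a compact domain with Lipschitz boundary containing a neighborhood of the origin, and let $D$ be a measurable subset of the boundary of the slit domain. Given $\epsilon>0$ and $E_0>0$, there exists $r^*>0$ such that if $u$ is an eigenfunction of $q$ on $H^1_D(\Omega_{\Sigma_t})$ with eigenvalue $E\le E_0$, then for all $t<r^*$, \[\int_{U_{t,r^*}}|u|^2\,dm\le\epsilon\int_{\Omega}|u|^2\,dm,\] where $U_{t,r^*}$ is the elliptical neighborhood of the slit $\Sigma_t$ of radius $r^*$.
   Context: $\Sigma_t=[-t,t]\times\{0\}$; $\Omega_{\Sigma_t}$ is the metric completion of $\Omega\setminus\Sigma_t$ for the intrinsic length metric. $H^1_D$ is the completion of smooth functions on $\Omega_{\Sigma_t}$ vanishing on $D$ for the norm $q(u)^{1/2}+N(u)^{1/2}$, $q(u)=\int|\nabla u|^2dm$, $N(u)=\int|u|^2dm$; $u$ is an eigenfunction with eigenvalue $E$ if $\mathfrak q(u,v)=E\,\mathfrak n(u,v)$ for all $v\in H^1_D$ (polarizations). Elliptical coordinates: $\phi_t(r,\theta)=(\sqrt{r^2+t^2}\cos\theta,\ r\sin\theta)$ for $r\ge 0$, $\theta\in\mathbb{R}/2\pi\mathbb{Z}$; the elliptical neighborhood of radius $\rho$ is $U_{t,\rho}=\phi_t([0,\rho]\times S^1)$, the closed region bounded by the ellipse $\phi_t(\{\rho\}\times S^1)$. *)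

theory Defs
  imports "HOL-Analysis.Analysis"
begin

type_synonym pt = "real \<times> real"

definition compact_domain :: "pt set \<Rightarrow> bool" where
  "compact_domain \<Omega> \<longleftrightarrow> compact \<Omega> \<and> interior \<Omega> \<noteq> {} \<and> connected (interior \<Omega>)
     \<and> closure (interior \<Omega>) = \<Omega>"

definition lipschitz_boundary :: "pt set \<Rightarrow> bool" where
  "lipschitz_boundary \<Omega> \<longleftrightarrow>
     (\<forall>p\<in>frontier \<Omega>. \<exists>R a b L g. orthogonal_transformation R \<and> a > 0 \<and> b > 0 \<and>
        L-lipschitz_on UNIV (g :: real \<Rightarrow> real) \<and>
        (\<forall>s. \<bar>s\<bar> < a \<longrightarrow> \<bar>g s\<bar> < b / 2) \<and>
        (\<forall>y1 y2. \<bar>y1\<bar> < a \<and> \<bar>y2\<bar> < b \<longrightarrow> (p + R (y1, y2) \<in> \<Omega> \<longleftrightarrow> y2 \<le> g y1)))"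

definition slit :: "real \<Rightarrow> pt set" where
  "slit t = {-t..t} \<times> {0}"

definition ell_coord :: "real \<Rightarrow> real \<Rightarrow> real \<Rightarrow> pt" where
  "ell_coord t r \<theta> = (sqrt (r\<^sup>2 + t\<^sup>2) * cos \<theta>, r * sin \<theta>)"

definition ell_nbhd :: "real \<Rightarrow> real \<Rightarrow> pt set" where
  "ell_nbhd t \<rho> = (\<lambda>(r, \<theta>). ell_coord t r \<theta>) ` ({0..\<rho>} \<times> UNIV)"

definition curve_length :: "(real \<Rightarrow> pt) \<Rightarrow> ennreal" where
  "curve_length g = (SUP (n, s) \<in> {(n, s :: nat \<Rightarrow> real). mono s \<and> s 0 = 0 \<and> s n = 1}.
      ennreal (\<Sum>i<n. dist (g (s i)) (g (s (Suc i)))))"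

definition idist :: "pt set \<Rightarrow> real \<Rightarrow> pt \<Rightarrow> pt \<Rightarrow> ennreal" where
  "idist \<Omega> t x y = (INF g \<in> {g. path g \<and> path_image g \<subseteq> \<Omega> - slit t \<and>
        pathstart g = x \<and> pathfinish g = y}. curve_length g)"

definition icauchy :: "pt set \<Rightarrow> real \<Rightarrow> (nat \<Rightarrow> pt) \<Rightarrow> bool" where
  "icauchy \<Omega> t x \<longleftrightarrow> range x \<subseteq> \<Omega> - slit t \<and>
     (\<forall>e>0. \<exists>N. \<forall>m\<ge>N. \<forall>n\<ge>N. idist \<Omega> t (x m) (x n) < ennreal e)"

definition iequiv :: "pt set \<Rightarrow> real \<Rightarrow> (nat \<Rightarrow> pt) \<Rightarrow> (nat \<Rightarrow> pt) \<Rightarrow> bool" where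
  "iequiv \<Omega> t x y \<longleftrightarrow> (\<forall>e>0. \<exists>N. \<forall>n\<ge>N. idist \<Omega> t (x n) (y n) < ennreal e)"

text \<open>Points of the metric completion \<Omega>_\<Sigma>_t: equivalence classes of Cauchy sequences.\<close>
definition slit_completion :: "pt set \<Rightarrow> real \<Rightarrow> (nat \<Rightarrow> pt) set set" where
  "slit_completion \<Omega> t = {{y. icauchy \<Omega> t y \<and> iequiv \<Omega> t x y} | x. icauchy \<Omega> t x}"

definition slit_boundary :: "pt set \<Rightarrow> real \<Rightarrow> (nat \<Rightarrow> pt) set set" where
  "slit_boundary \<Omega> t = {c \<in> slit_completion \<Omega> t.
      \<not> (\<exists>p \<in> interior \<Omega> - slit t. (\<lambda>n. p) \<in> c)}"

definition cdist :: "pt set \<Rightarrow> real \<Rightarrow> (nat \<Rightarrow> pt) set \<Rightarrow> (nat \<Rightarrow> pt) set \<Rightarrow> ennreal" where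
  "cdist \<Omega> t c c' = (INF x\<in>c. INF y\<in>c'. limsup (\<lambda>n. idist \<Omega> t (x n) (y n)))"

definition cdiam :: "pt set \<Rightarrow> real \<Rightarrow> (nat \<Rightarrow> pt) set set \<Rightarrow> ennreal" where
  "cdiam \<Omega> t A = (SUP c\<in>A. SUP c'\<in>A. cdist \<Omega> t c c')"

definition hausdorff1 :: "pt set \<Rightarrow> real \<Rightarrow> (nat \<Rightarrow> pt) set set \<Rightarrow> ennreal" where
  "hausdorff1 \<Omega> t A = (SUP \<delta>\<in>{0<..}. INF C \<in> {C :: nat \<Rightarrow> (nat \<Rightarrow> pt) set set.
      A \<subseteq> \<Union>(range C) \<and> (\<forall>i. C i \<subseteq> slit_boundary \<Omega> t \<and> cdiam \<Omega> t (C i) \<le> ennreal \<delta>)}.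
      (\<Sum>i. cdiam \<Omega> t (C i)))"

definition boundary_measurable :: "pt set \<Rightarrow> real \<Rightarrow> (nat \<Rightarrow> pt) set set \<Rightarrow> bool" where
  "boundary_measurable \<Omega> t D \<longleftrightarrow> (\<forall>T \<subseteq> slit_boundary \<Omega> t.
      hausdorff1 \<Omega> t T = hausdorff1 \<Omega> t (T \<inter> D) + hausdorff1 \<Omega> t (T - D))"

definition dirv :: "bool \<Rightarrow> pt" where
  "dirv b = (if b then (1, 0) else (0, 1))"

fun iterpd :: "bool list \<Rightarrow> (pt \<Rightarrow> real) \<Rightarrow> pt \<Rightarrow> real" where
  "iterpd [] f = f"
| "iterpd (d # ds) f = (\<lambda>x. deriv (\<lambda>s. iterpd ds f (x + s *\<^sub>R dirv d)) 0)"

definition grad :: "(pt \<Rightarrow> real) \<Rightarrow> pt \<Rightarrow> pt" where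
  "grad f x = (iterpd [True] f x, iterpd [False] f x)"

definition idist_ucont :: "pt set \<Rightarrow> real \<Rightarrow> pt set \<Rightarrow> (pt \<Rightarrow> real) \<Rightarrow> bool" where
  "idist_ucont \<Omega> t S f \<longleftrightarrow> (\<forall>e>0. \<exists>\<delta>>0. \<forall>x\<in>S. \<forall>y\<in>S.
      idist \<Omega> t x y < ennreal \<delta> \<longrightarrow> \<bar>f x - f y\<bar> < e)"

text \<open>Smooth functions on \<Omega>_\<Sigma>_t (all derivatives extend continuously to the metric
  completion) vanishing on D.\<close>
definition slit_test :: "pt set \<Rightarrow> real \<Rightarrow> (nat \<Rightarrow> pt) set set \<Rightarrow> (pt \<Rightarrow> real) \<Rightarrow> bool" where
  "slit_test \<Omega> t D \<phi> \<longleftrightarrow>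
     (\<forall>ds. iterpd ds \<phi> differentiable_on (interior \<Omega> - slit t)) \<and>
     idist_ucont \<Omega> t (\<Omega> - slit t) \<phi> \<and>
     (\<forall>ds. idist_ucont \<Omega> t (interior \<Omega> - slit t) (iterpd ds \<phi>)) \<and>
     (\<forall>c\<in>D. \<forall>x\<in>c. (\<lambda>n. \<phi> (x n)) \<longlonglongrightarrow> 0)"

text \<open>Elements of the completion H^1_D, represented by a function u together with
  its (L^2-limit) gradient G.\<close>
definition H1D :: "pt set \<Rightarrow> real \<Rightarrow> (nat \<Rightarrow> pt) set set \<Rightarrow> ((pt \<Rightarrow> real) \<times> (pt \<Rightarrow> pt)) set" where
  "H1D \<Omega> t D = {(u, G).
     set_borel_measurable lebesgue \<Omega> u \<and> set_borel_measurable lebesgue \<Omega> G \<and>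
     set_integrable lebesgue \<Omega> (\<lambda>x. (u x)\<^sup>2) \<and> set_integrable lebesgue \<Omega> (\<lambda>x. (norm (G x))\<^sup>2) \<and>
     (\<exists>\<phi>. (\<forall>n. slit_test \<Omega> t D (\<phi> n)) \<and>
        (\<forall>n. set_integrable lebesgue \<Omega> (\<lambda>x. (\<phi> n x - u x)\<^sup>2) \<and>
             set_integrable lebesgue \<Omega> (\<lambda>x. (norm (grad (\<phi> n) x - G x))\<^sup>2)) \<and>
        (\<lambda>n. LINT x:\<Omega>|lebesgue. (\<phi> n x - u x)\<^sup>2) \<longlonglongrightarrow> 0 \<and>
        (\<lambda>n. LINT x:\<Omega>|lebesgue. (norm (grad (\<phi> n) x - G x))\<^sup>2) \<longlonglongrightarrow> 0)}"

definition is_eigenfunction ::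
  "pt set \<Rightarrow> real \<Rightarrow> (nat \<Rightarrow> pt) set set \<Rightarrow> (pt \<Rightarrow> real) \<Rightarrow> (pt \<Rightarrow> pt) \<Rightarrow> real \<Rightarrow> bool" where
  "is_eigenfunction \<Omega> t D u G E \<longleftrightarrow> (u, G) \<in> H1D \<Omega> t D \<and>
     (\<forall>v H. (v, H) \<in> H1D \<Omega> t D \<longrightarrow>
        (LINT x:\<Omega>|lebesgue. G x \<bullet> H x) = E * (LINT x:\<Omega>|lebesgue. u x * v x))"

end

theory Submission
  imports Defs
begin


lemma ftc_sq_bound:
  fixes f f' :: "real \<Rightarrow> real"
  assumes a: "a > 0"
    and d: "\<And>x. x \<in> {-a..a} \<Longrightarrow> (f has_real_derivative f' x) (at x)"
    and c: "continuous_on {-a..a} f'"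
    and s: "s \<in> {-a..a}" and x: "x \<in> {-a..a}"
  shows "(f x)\<^sup>2 \<le> (f s)\<^sup>2 + integral {-a..a} (\<lambda>w. \<bar>2 * f w * f' w\<bar>)"
proof -
  have cf: "continuous_on {-a..a} f"
    using d by (meson DERIV_continuous continuous_at_imp_continuous_on)
  have ch: "continuous_on {-a..a} (\<lambda>w. 2 * f w * f' w)"
    by (intro continuous_intros cf c)
  have cha: "continuous_on {-a..a} (\<lambda>w. \<bar>2 * f w * f' w\<bar>)"
    by (intro continuous_intros cf c)
  have der: "((\<lambda>w. (f w)\<^sup>2) has_vector_derivative 2 * f w * f' w) (at w within T)"
    if "w \<in> {-a..a}" for w T
  proof -
    have "((\<lambda>w. (f w)\<^sup>2) has_real_derivative 2 * f w * f' w) (at w)"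
      using d[OF that] by (auto intro!: derivative_eq_intros)
    then show ?thesis
      by (simp add: has_real_derivative_iff_has_vector_derivative has_vector_derivative_at_within)
  qed
  have gen: "(f q)\<^sup>2 - (f p)\<^sup>2 \<le> integral {-a..a} (\<lambda>w. \<bar>2 * f w * f' w\<bar>)
          \<and> (f p)\<^sup>2 - (f q)\<^sup>2 \<le> integral {-a..a} (\<lambda>w. \<bar>2 * f w * f' w\<bar>)"
    if pq: "p \<le> q" "p \<in> {-a..a}" "q \<in> {-a..a}" for p q
  proof -
    have sub: "{p..q} \<subseteq> {-a..a}" using pq by auto
    have hi: "((\<lambda>w. 2 * f w * f' w) has_integral (f q)\<^sup>2 - (f p)\<^sup>2) {p..q}"
      by (rule fundamental_theorem_of_calculus[OF pq(1)]) (use der sub in blast)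
    have int1: "(\<lambda>w. 2 * f w * f' w) integrable_on {p..q}"
      using hi by blast
    have int2: "(\<lambda>w. \<bar>2 * f w * f' w\<bar>) integrable_on {p..q}"
      by (rule integrable_continuous_interval) (rule continuous_on_subset[OF cha sub])
    have int3: "(\<lambda>w. \<bar>2 * f w * f' w\<bar>) integrable_on {-a..a}"
      by (rule integrable_continuous_interval[OF cha])
    have e1: "integral {p..q} (\<lambda>w. 2 * f w * f' w) = (f q)\<^sup>2 - (f p)\<^sup>2"
      using hi by blast
    have m1a: "integral {p..q} (\<lambda>w. 2 * f w * f' w) \<le> integral {p..q} (\<lambda>w. \<bar>2 * f w * f' w\<bar>)"
      by (rule integral_le[OF int1 int2]) simp
    have m1b: "integral {p..q} (\<lambda>w. - (2 * f w * f' w)) \<le> integral {p..q} (\<lambda>w. \<bar>2 * f w * f' w\<bar>)"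
      by (rule integral_le[OF integrable_neg[OF int1] int2]) simp
    have m1: "\<bar>integral {p..q} (\<lambda>w. 2 * f w * f' w)\<bar> \<le> integral {p..q} (\<lambda>w. \<bar>2 * f w * f' w\<bar>)"
      using m1a m1b by (simp add: integral_neg)
    have m2: "integral {p..q} (\<lambda>w. \<bar>2 * f w * f' w\<bar>) \<le> integral {-a..a} (\<lambda>w. \<bar>2 * f w * f' w\<bar>)"
      by (rule integral_subset_le[OF sub int2 int3]) auto
    show ?thesis using e1 m1 m2 by linarith
  qed
  show ?thesis
  proof (cases "s \<le> x")
    case True with gen[OF True s x] show ?thesis by linarith
  next
    case False then have "x \<le> s" by simp
    with gen[OF this x s] show ?thesis by linarith
  qed
qed

lemma oned_bound:
  fixes f f' :: "real \<Rightarrow> real"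
  assumes a: "a > 0"
    and d: "\<And>x. x \<in> {-a..a} \<Longrightarrow> (f has_real_derivative f' x) (at x)"
    and c: "continuous_on {-a..a} f'"
    and x: "x \<in> {-a..a}"
  shows "(f x)\<^sup>2 \<le> 3 / (2 * a) * integral {-a..a} (\<lambda>w. (f w)\<^sup>2) + a * integral {-a..a} (\<lambda>w. (f' w)\<^sup>2)"
proof -
  define K where "K = integral {-a..a} (\<lambda>w. \<bar>2 * f w * f' w\<bar>)"
  define I1 where "I1 = integral {-a..a} (\<lambda>w. (f w)\<^sup>2)"
  define I2 where "I2 = integral {-a..a} (\<lambda>w. (f' w)\<^sup>2)"
  have cf: "continuous_on {-a..a} f"
    using d by (meson DERIV_continuous continuous_at_imp_continuous_on)
  have i1: "(\<lambda>w. (f w)\<^sup>2) integrable_on {-a..a}"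
    by (intro integrable_continuous_interval continuous_intros cf)
  have i2: "(\<lambda>w. (f' w)\<^sup>2) integrable_on {-a..a}"
    by (intro integrable_continuous_interval continuous_intros c)
  have i2': "(\<lambda>w. a * (f' w)\<^sup>2) integrable_on {-a..a}"
    using integrable_on_cmult_left[OF i2, of a] by simp
  have i1': "(\<lambda>w. (f w)\<^sup>2 / a) integrable_on {-a..a}"
    using integrable_on_divide[OF i1, of a] by simp
  have i3: "(\<lambda>w. \<bar>2 * f w * f' w\<bar>) integrable_on {-a..a}"
    by (intro integrable_continuous_interval continuous_intros cf c)
  have pt: "(f x)\<^sup>2 - K \<le> (f s)\<^sup>2" if "s \<in> {-a..a}" for s
    using ftc_sq_bound[OF a d c that x] unfolding K_def by linarith
  have "integral {-a..a} (\<lambda>s. (f x)\<^sup>2 - K) \<le> I1"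
    unfolding I1_def by (rule integral_le[OF integrable_const_ivl i1]) (use pt in auto)
  moreover have "integral {-a..a} (\<lambda>s. (f x)\<^sup>2 - K) = 2 * a * ((f x)\<^sup>2 - K)"
    using a by (simp add: algebra_simps)
  ultimately have A: "2 * a * ((f x)\<^sup>2 - K) \<le> I1" by linarith
  have pw: "\<bar>2 * f w * f' w\<bar> \<le> (f w)\<^sup>2 / a + a * (f' w)\<^sup>2" for w
  proof -
    have "0 \<le> (\<bar>f w\<bar> - a * \<bar>f' w\<bar>)\<^sup>2" by simp
    then have "a * \<bar>2 * f w * f' w\<bar> \<le> (f w)\<^sup>2 + a * (a * (f' w)\<^sup>2)"
      using a by (simp add: power2_eq_square abs_mult algebra_simps)
    then show ?thesis using a by (simp add: field_simps)
  qed
  have "K \<le> integral {-a..a} (\<lambda>w. (f w)\<^sup>2 / a + a * (f' w)\<^sup>2)"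
    unfolding K_def
    by (rule integral_le[OF i3]) (auto intro!: integrable_add i1' i2' pw)
  also have "\<dots> = I1 / a + a * I2"
    unfolding I1_def I2_def
    by (subst integral_add[OF i1' i2']) simp
  finally have B: "K \<le> I1 / a + a * I2" .
  from A have "(f x)\<^sup>2 \<le> I1 / (2 * a) + K" using a by (simp add: field_simps)
  with B have "(f x)\<^sup>2 \<le> I1 / (2 * a) + I1 / a + a * I2" by linarith
  also have "I1 / (2 * a) + I1 / a = 3 / (2 * a) * I1" using a by (simp add: field_simps)
  finally show ?thesis unfolding I1_def I2_def by simp
qed

lemma meas_ind_cont:
  fixes f :: "'a::topological_space \<Rightarrow> real"
  assumes "A \<in> sets borel" "continuous_on A f"
  shows "(\<lambda>z. ennreal (indicator A z * f z)) \<in> borel_measurable borel"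
proof -
  have "(\<lambda>z. indicator A z *\<^sub>R f z) \<in> borel_measurable borel"
    by (rule borel_measurable_continuous_on_indicator[OF assms])
  from measurable_compose[OF this measurable_ennreal] show ?thesis by simp
qed

lemma strip_borel: "({c..d::real} \<times> ({e..g::real} - {0})) \<in> sets borel"
proof -
  have eq: "{c..d} \<times> ({e..g} - {0}) = ({c..d} \<times> {e..g}) - (UNIV \<times> {0::real})" by auto
  have "closed ({c..d} \<times> {e..g::real})" by (intro closed_Times) auto
  moreover have "closed (UNIV \<times> {0::real})" by (intro closed_Times) auto
  ultimately show ?thesis unfolding eq by (intro sets.Diff borel_closed) 
qed

lemma pair_sf_lborel: "pair_sigma_finite lborel lborel"
  by (simp add: pair_sigma_finite_def lborel.sigma_finite_measure_axioms)

lemma fubini_lborel2: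
  fixes f :: "real \<times> real \<Rightarrow> ennreal"
  assumes "f \<in> borel_measurable borel"
  shows "(\<integral>\<^sup>+ z. f z \<partial>lborel) = (\<integral>\<^sup>+ y. (\<integral>\<^sup>+ x. f (x, y) \<partial>lborel) \<partial>lborel)"
proof -
  have m: "f \<in> borel_measurable (lborel \<Otimes>\<^sub>M lborel)"
    using assms by (simp add: lborel_prod)
  show ?thesis
    using pair_sigma_finite.nn_integral_snd[OF pair_sf_lborel m] by (simp add: lborel_prod)
qed

lemma core2d:
  fixes \<phi> \<phi>x :: "real \<times> real \<Rightarrow> real" and a b r :: real
  defines "S \<equiv> {-a..a} \<times> ({-r..r} - {0})"
    and "Q \<equiv> {-b..b} \<times> ({-r..r} - {0})"
  assumes a: "a > 0" and b: "0 < b" "b \<le> a"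
    and c1: "continuous_on S \<phi>" and c2: "continuous_on S \<phi>x"
    and der: "\<And>x y. x \<in> {-a..a} \<Longrightarrow> y \<in> {-r..r} - {0} \<Longrightarrow>
                 ((\<lambda>s. \<phi> (s, y)) has_real_derivative \<phi>x (x, y)) (at x)"
  shows "(\<integral>\<^sup>+ z. ennreal (indicator Q z * (\<phi> z)\<^sup>2) \<partial>lborel)
     \<le> ennreal (3 * b / a) * (\<integral>\<^sup>+ z. ennreal (indicator S z * (\<phi> z)\<^sup>2) \<partial>lborel)
       + ennreal (2 * a * b) * (\<integral>\<^sup>+ z. ennreal (indicator S z * (\<phi>x z)\<^sup>2) \<partial>lborel)"
proof -
  define k1 where "k1 = 3 * b / a"
  define k2 where "k2 = 2 * a * b"
  have k: "k1 \<ge> 0" "k2 \<ge> 0" using a b by (auto simp: k1_def k2_def)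
  have Sb: "S \<in> sets borel" unfolding S_def by (rule strip_borel)
  have Qb: "Q \<in> sets borel" unfolding Q_def by (rule strip_borel)
  have QS: "Q \<subseteq> S" using b unfolding Q_def S_def by auto
  have m1: "(\<lambda>z. ennreal (indicator S z * (\<phi> z)\<^sup>2)) \<in> borel_measurable borel"
    by (rule meas_ind_cont[OF Sb]) (intro continuous_intros c1)
  have m2: "(\<lambda>z. ennreal (indicator S z * (\<phi>x z)\<^sup>2)) \<in> borel_measurable borel"
    by (rule meas_ind_cont[OF Sb]) (intro continuous_intros c2)
  have mQ: "(\<lambda>z. ennreal (indicator Q z * (\<phi> z)\<^sup>2)) \<in> borel_measurable borel"
    by (rule meas_ind_cont[OF Qb]) (intro continuous_intros continuous_on_subset[OF c1 QS])
  define g where "g z = ennreal (indicator S z * (k1 * (\<phi> z)\<^sup>2 + k2 * (\<phi>x z)\<^sup>2))" for z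
  have geq: "g z = ennreal k1 * ennreal (indicator S z * (\<phi> z)\<^sup>2) + ennreal k2 * ennreal (indicator S z * (\<phi>x z)\<^sup>2)" for z
  proof (cases "z \<in> S")
    case True
    have "ennreal (k1 * (\<phi> z)\<^sup>2 + k2 * (\<phi>x z)\<^sup>2) = ennreal (k1 * (\<phi> z)\<^sup>2) + ennreal (k2 * (\<phi>x z)\<^sup>2)"
      using k by (intro ennreal_plus) auto
    also have "\<dots> = ennreal k1 * ennreal ((\<phi> z)\<^sup>2) + ennreal k2 * ennreal ((\<phi>x z)\<^sup>2)"
      using k by (simp add: ennreal_mult)
    finally show ?thesis using True by (simp add: g_def)
  next
    case False then show ?thesis by (simp add: g_def)
  qed
  have mg: "g \<in> borel_measurable borel"
    unfolding geq using m1 m2 by measurable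
  have gint: "(\<integral>\<^sup>+ z. g z \<partial>lborel) = ennreal k1 * (\<integral>\<^sup>+ z. ennreal (indicator S z * (\<phi> z)\<^sup>2) \<partial>lborel)
       + ennreal k2 * (\<integral>\<^sup>+ z. ennreal (indicator S z * (\<phi>x z)\<^sup>2) \<partial>lborel)"
    unfolding geq using m1 m2
    by (subst nn_integral_add) (auto simp: nn_integral_cmult)
  have pw: "(\<integral>\<^sup>+ x. ennreal (indicator Q (x, y) * (\<phi> (x, y))\<^sup>2) \<partial>lborel) \<le> (\<integral>\<^sup>+ x. g (x, y) \<partial>lborel)" for y
  proof (cases "y \<in> {-r..r} - {0}")
    case False
    then have "\<And>x. indicator Q (x, y) = (0::real)" unfolding Q_def by (auto simp: indicator_def)
    then show ?thesis by simp
  next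
    case True
    define I1 where "I1 = integral {-a..a} (\<lambda>w. (\<phi> (w, y))\<^sup>2)"
    define I2 where "I2 = integral {-a..a} (\<lambda>w. (\<phi>x (w, y))\<^sup>2)"
    define C where "C = 3 / (2 * a) * I1 + a * I2"
    have cy: "continuous_on {-a..a} (\<lambda>w. \<phi>x (w, y))"
      by (rule continuous_on_compose2[OF c2]) (use True in \<open>auto intro!: continuous_intros simp: S_def\<close>)
    have cy1: "continuous_on {-a..a} (\<lambda>w. \<phi> (w, y))"
      by (rule continuous_on_compose2[OF c1]) (use True in \<open>auto intro!: continuous_intros simp: S_def\<close>)
    have bnd: "(\<phi> (x, y))\<^sup>2 \<le> C" if "x \<in> {-a..a}" for x
      unfolding C_def I1_def I2_def
      by (rule oned_bound[OF a _ cy that]) (rule der[OF _ True], simp)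
    have C0: "0 \<le> C" using bnd[of 0] a by (auto intro: order_trans[OF zero_le_power2])
    have "(\<integral>\<^sup>+ x. ennreal (indicator Q (x, y) * (\<phi> (x, y))\<^sup>2) \<partial>lborel)
        \<le> (\<integral>\<^sup>+ x. ennreal (indicator {-b..b} x * C) \<partial>lborel)"
      using b bnd True unfolding Q_def
      by (intro nn_integral_mono) (auto simp: indicator_def intro!: ennreal_leI)
    also have "\<dots> = ennreal (2 * b * C)"
    proof -
      have hc: "((\<lambda>x. C) has_integral (2 * b * C)) {-b..b}"
        using has_integral_const_real[of C "-b" b] b by simp
      show ?thesis by (rule nn_integral_has_integral_lebesgue[OF _ hc]) (use C0 in auto)
    qed
    also have "2 * b * C = k1 * I1 + k2 * I2"
      using a b by (simp add: C_def k1_def k2_def field_simps)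
    also have "ennreal (k1 * I1 + k2 * I2) = (\<integral>\<^sup>+ x. g (x, y) \<partial>lborel)"
    proof -
      have hi: "((\<lambda>w. k1 * (\<phi> (w, y))\<^sup>2 + k2 * (\<phi>x (w, y))\<^sup>2) has_integral (k1 * I1 + k2 * I2)) {-a..a}"
        unfolding I1_def I2_def
        by (intro has_integral_add has_integral_mult_right integrable_integral
              integrable_continuous_interval continuous_intros cy cy1)
      have "(\<integral>\<^sup>+ x. g (x, y) \<partial>lborel) = (\<integral>\<^sup>+ x. ennreal (indicator {-a..a} x * (k1 * (\<phi> (x, y))\<^sup>2 + k2 * (\<phi>x (x, y))\<^sup>2)) \<partial>lborel)"
        using True by (intro nn_integral_cong) (auto simp: g_def S_def indicator_def)
      also have "\<dots> = ennreal (k1 * I1 + k2 * I2)"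
        by (rule nn_integral_has_integral_lebesgue[OF _ hi]) (use k in auto)
      finally show ?thesis by simp
    qed
    finally show ?thesis .
  qed
  have "(\<integral>\<^sup>+ z. ennreal (indicator Q z * (\<phi> z)\<^sup>2) \<partial>lborel)
       = (\<integral>\<^sup>+ y. (\<integral>\<^sup>+ x. ennreal (indicator Q (x, y) * (\<phi> (x, y))\<^sup>2) \<partial>lborel) \<partial>lborel)"
    by (rule fubini_lborel2[OF mQ])
  also have "\<dots> \<le> (\<integral>\<^sup>+ y. (\<integral>\<^sup>+ x. g (x, y) \<partial>lborel) \<partial>lborel)"
    by (intro nn_integral_mono pw)
  also have "\<dots> = (\<integral>\<^sup>+ z. g z \<partial>lborel)"
    by (rule fubini_lborel2[OF mg, symmetric])
  finally show ?thesis unfolding gint k1_def k2_def .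
qed


lemma partial_x:
  fixes \<phi> :: "real \<times> real \<Rightarrow> real"
  assumes "\<phi> differentiable (at (x, y))"
  shows "((\<lambda>s. \<phi> (s, y)) has_real_derivative iterpd [True] \<phi> (x, y)) (at x)"
proof -
  obtain D where D: "(\<phi> has_derivative D) (at (x, y))"
    using assms by (auto simp: differentiable_def)
  have lin: "linear D" using D by (rule has_derivative_linear)
  have Dh: "D (h, 0) = h * D (1, 0)" for h
  proof -
    have "D (h, 0) = D (h *\<^sub>R (1, 0))" by simp
    also have "\<dots> = h *\<^sub>R D (1, 0)" using lin by (rule linear_scale)
    finally show ?thesis by simp
  qed
  have fe: "(\<lambda>h. D (h, 0)) = (*) (D (1, 0))"
  proof
    fix h show "D (h, 0) = D (1, 0) * h" by (subst Dh) (rule mult.commute)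
  qed
  have p1: "((\<lambda>s. (s, y)) has_derivative (\<lambda>h. (h, 0))) (at x)"
    by (auto intro!: derivative_eq_intros)
  have c1: "((\<lambda>s. \<phi> (s, y)) has_derivative (\<lambda>h. D (h, 0))) (at x)"
    using has_derivative_compose[OF p1, of \<phi> D] D by simp
  have r1: "((\<lambda>s. \<phi> (s, y)) has_real_derivative D (1, 0)) (at x)"
    unfolding has_field_derivative_def using c1 by (simp only: fe)
  have p2: "((\<lambda>s. (x, y) + s *\<^sub>R (1::real, 0::real)) has_derivative (\<lambda>h. (h, 0))) (at 0)"
    by (auto intro!: derivative_eq_intros)
  have D': "(\<phi> has_derivative D) (at ((x, y) + (0::real) *\<^sub>R (1, 0)))" using D by simp
  have c2: "((\<lambda>s. \<phi> ((x, y) + s *\<^sub>R (1, 0))) has_derivative (\<lambda>h. D (h, 0))) (at 0)"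
    using has_derivative_compose[OF p2 D'] by simp
  have r2: "((\<lambda>s. \<phi> ((x, y) + s *\<^sub>R (1, 0))) has_real_derivative D (1, 0)) (at 0)"
    unfolding has_field_derivative_def using c2 by (simp only: fe)
  have "iterpd [True] \<phi> (x, y) = D (1, 0)"
    using DERIV_imp_deriv[OF r2] by (simp add: dirv_def)
  then show ?thesis using r1 by simp
qed

lemma ennr_split2:
  assumes "0 \<le> q" "0 \<le> w"
  shows "ennreal (2 * q + 2 * w) = 2 * ennreal q + 2 * ennreal w"
  using assms by (simp add: ennreal_plus ennreal_mult)

lemma set_nn:
  fixes f :: "real \<times> real \<Rightarrow> real"
  assumes "set_integrable lebesgue \<Omega> f" "\<And>x. 0 \<le> f x"
  shows "(\<integral>\<^sup>+x. ennreal (indicator \<Omega> x * f x) \<partial>lebesgue) = ennreal (LINT x:\<Omega>|lebesgue. f x)"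
proof -
  have i: "integrable lebesgue (\<lambda>x. indicator \<Omega> x *\<^sub>R f x)"
    using assms(1) by (simp add: set_integrable_def)
  have "(\<integral>\<^sup>+x. ennreal (indicator \<Omega> x *\<^sub>R f x) \<partial>lebesgue) = ennreal (integral\<^sup>L lebesgue (\<lambda>x. indicator \<Omega> x *\<^sub>R f x))"
    by (rule nn_integral_eq_integral[OF i]) (use assms(2) in \<open>auto simp: indicator_def\<close>)
  then show ?thesis by (simp add: set_lebesgue_integral_def)
qed

lemma set_meas:
  fixes f :: "real \<times> real \<Rightarrow> real"
  assumes "set_integrable lebesgue \<Omega> f"
  shows "(\<lambda>x. ennreal (indicator \<Omega> x * f x)) \<in> borel_measurable lebesgue"
proof -
  have "(\<lambda>x. indicator \<Omega> x *\<^sub>R f x) \<in> borel_measurable lebesgue"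
    using assms by (simp add: set_integrable_def borel_measurable_integrable)
  from measurable_compose[OF this measurable_ennreal] show ?thesis by simp
qed

lemma axis_null: "{z::real \<times> real. snd z = 0} \<in> null_sets lebesgue"
proof -
  have "{z::real \<times> real. (0, 1) \<bullet> z = 0} = {z. snd z = 0}"
    by (auto simp: inner_prod_def)
  moreover have "negligible {z::real \<times> real. (0, 1) \<bullet> z = 0}"
    by (rule negligible_hyperplane) (simp add: zero_prod_def)
  ultimately show ?thesis by (simp add: negligible_iff_null_sets)
qed

lemma ell_bound:
  assumes "z \<in> ell_nbhd t r" "0 \<le> t" "t \<le> r"
  shows "\<bar>fst z\<bar> \<le> 2 * r \<and> \<bar>snd z\<bar> \<le> r"
proof -
  obtain \<rho> \<theta> where z: "z = ell_coord t \<rho> \<theta>" and \<rho>: "0 \<le> \<rho>" "\<rho> \<le> r"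
    using assms(1) by (auto simp: ell_nbhd_def)
  have "sqrt (\<rho>\<^sup>2 + t\<^sup>2) \<le> sqrt ((2 * r)\<^sup>2)"
  proof (intro real_sqrt_le_mono)
    have "\<rho>\<^sup>2 \<le> r\<^sup>2" using \<rho> by (intro power_mono) auto
    moreover have "t\<^sup>2 \<le> r\<^sup>2" using assms by (intro power_mono) auto
    moreover have "(2 * r)\<^sup>2 = 4 * r\<^sup>2" by (simp add: power_mult_distrib)
    moreover have "0 \<le> r\<^sup>2" by simp
    ultimately show "\<rho>\<^sup>2 + t\<^sup>2 \<le> (2 * r)\<^sup>2" by linarith
  qed
  also have "\<dots> = 2 * r" using \<rho> by (intro real_sqrt_unique) auto
  finally have s: "sqrt (\<rho>\<^sup>2 + t\<^sup>2) \<le> 2 * r" .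
  have "\<bar>sqrt (\<rho>\<^sup>2 + t\<^sup>2) * cos \<theta>\<bar> = sqrt (\<rho>\<^sup>2 + t\<^sup>2) * \<bar>cos \<theta>\<bar>"
    by (simp add: abs_mult)
  also have "\<dots> \<le> sqrt (\<rho>\<^sup>2 + t\<^sup>2) * 1"
    by (intro mult_left_mono abs_cos_le_one) simp
  finally have c: "\<bar>sqrt (\<rho>\<^sup>2 + t\<^sup>2) * cos \<theta>\<bar> \<le> sqrt (\<rho>\<^sup>2 + t\<^sup>2)" by (simp only: mult_1_right)
  have "\<bar>\<rho> * sin \<theta>\<bar> = \<rho> * \<bar>sin \<theta>\<bar>"
    using \<rho> by (simp add: abs_mult)
  also have "\<dots> \<le> \<rho> * 1"
    using \<rho> by (intro mult_left_mono abs_sin_le_one) simp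
  finally have d: "\<bar>\<rho> * sin \<theta>\<bar> \<le> \<rho>" by (simp only: mult_1_right)
  note c d
  show ?thesis unfolding z ell_coord_def fst_conv snd_conv using s \<rho> c d by linarith
qed


lemma sq2: "(x::real)\<^sup>2 \<le> 2 * y\<^sup>2 + 2 * (x - y)\<^sup>2"
  using zero_le_power2[of "x - 2 * y"] by (simp add: power2_eq_square algebra_simps)

lemma fst_sq_le: "(fst (g::real \<times> real))\<^sup>2 \<le> 2 * (norm G)\<^sup>2 + 2 * (norm (g - G))\<^sup>2"
proof -
  obtain p q where g: "g = (p, q)" by (cases g)
  have "(fst g)\<^sup>2 \<le> (norm g)\<^sup>2" by (simp add: g norm_Pair)
  also have "(norm g)\<^sup>2 \<le> 2 * (norm G)\<^sup>2 + 2 * (norm g - norm G)\<^sup>2" by (rule sq2)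
  also have "(norm g - norm G)\<^sup>2 \<le> (norm (g - G))\<^sup>2"
  proof -
    have "\<bar>norm g - norm G\<bar> \<le> norm (g - G)" by (rule norm_triangle_ineq3)
    then have "\<bar>norm g - norm G\<bar>\<^sup>2 \<le> (norm (g - G))\<^sup>2" by (intro power_mono) auto
    then show ?thesis by simp
  qed
  finally show ?thesis by simp
qed

lemma ennr_le2:
  fixes p q w :: real
  assumes "p \<le> 2 * q + 2 * w" "0 \<le> q" "0 \<le> w"
  shows "ennreal p \<le> 2 * ennreal q + 2 * ennreal w"
proof -
  have "ennreal p \<le> ennreal (2 * q + 2 * w)" using assms(1) by (rule ennreal_leI)
  also have "\<dots> = 2 * ennreal q + 2 * ennreal w" using assms(2,3) by (rule ennr_split2)
  finally show ?thesis .
qed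

lemma ennr_combine:
  fixes c1 c2 A d G g :: real
  assumes "0 \<le> c1" "0 \<le> c2" "0 \<le> A" "0 \<le> d" "0 \<le> G" "0 \<le> g"
  shows "2 * (ennreal c1 * (2 * ennreal A + 2 * ennreal d) + ennreal c2 * (2 * ennreal G + 2 * ennreal g)) + 2 * ennreal d
     = ennreal (2 * (c1 * (2 * A + 2 * d) + c2 * (2 * G + 2 * g)) + 2 * d)"
proof -
  have e1: "2 * ennreal A + 2 * ennreal d = ennreal (2 * A + 2 * d)" by (rule ennr_split2[OF assms(3,4), symmetric])
  have e2: "2 * ennreal G + 2 * ennreal g = ennreal (2 * G + 2 * g)" by (rule ennr_split2[OF assms(5,6), symmetric])
  have e3: "ennreal c1 * ennreal (2 * A + 2 * d) = ennreal (c1 * (2 * A + 2 * d))"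
    using assms by (simp add: ennreal_mult)
  have e4: "ennreal c2 * ennreal (2 * G + 2 * g) = ennreal (c2 * (2 * G + 2 * g))"
    using assms by (simp add: ennreal_mult)
  have e5: "ennreal (c1 * (2 * A + 2 * d)) + ennreal (c2 * (2 * G + 2 * g)) = ennreal (c1 * (2 * A + 2 * d) + c2 * (2 * G + 2 * g))"
    using assms by (simp add: ennreal_plus)
  have n: "0 \<le> c1 * (2 * A + 2 * d) + c2 * (2 * G + 2 * g)" using assms by simp
  show ?thesis unfolding e1 e2 e3 e4 e5 using ennr_split2[OF n assms(4)] by simp
qed


lemma lint_nonneg:
  fixes f :: "real \<times> real \<Rightarrow> real"
  assumes "\<And>x. 0 \<le> f x"
  shows "0 \<le> (LINT x:\<Omega>|lebesgue. f x)"
  unfolding set_lebesgue_integral_def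
  by (rule integral_nonneg_AE) (use assms in \<open>auto simp: indicator_def\<close>)

lemma step_n:
  fixes \<Omega> :: "(real \<times> real) set" and u \<phi> :: "real \<times> real \<Rightarrow> real"
    and G :: "real \<times> real \<Rightarrow> real \<times> real" and a b r :: real and Wo :: "(real \<times> real) set"
  defines "S \<equiv> {-a..a} \<times> ({-r..r} - {0})" and "Q \<equiv> {-b..b} \<times> ({-r..r} - {0})"
  defines "A \<equiv> LINT x:\<Omega>|lebesgue. (u x)\<^sup>2" and "\<Gamma> \<equiv> LINT x:\<Omega>|lebesgue. (norm (G x))\<^sup>2"
    and "\<delta> \<equiv> LINT x:\<Omega>|lebesgue. (\<phi> x - u x)\<^sup>2"
    and "\<gamma> \<equiv> LINT x:\<Omega>|lebesgue. (norm (grad \<phi> x - G x))\<^sup>2"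
  assumes a: "a > 0" "0 < b" "b \<le> a"
    and SO: "S \<subseteq> Wo" and Oo: "open Wo" and OI: "Wo \<subseteq> interior \<Omega> - slit t" and SOm: "S \<subseteq> \<Omega>"
    and test: "slit_test \<Omega> t D \<phi>"
    and iu: "set_integrable lebesgue \<Omega> (\<lambda>x. (u x)\<^sup>2)"
    and iG: "set_integrable lebesgue \<Omega> (\<lambda>x. (norm (G x))\<^sup>2)"
    and id: "set_integrable lebesgue \<Omega> (\<lambda>x. (\<phi> x - u x)\<^sup>2)"
    and ig: "set_integrable lebesgue \<Omega> (\<lambda>x. (norm (grad \<phi> x - G x))\<^sup>2)"
  shows "(\<integral>\<^sup>+z. ennreal (indicator Q z * (u z)\<^sup>2) \<partial>lebesgue)
     \<le> ennreal (2 * (3 * b / a * (2 * A + 2 * \<delta>) + 2 * a * b * (2 * \<Gamma> + 2 * \<gamma>)) + 2 * \<delta>)"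
proof -
  define \<phi>x where "\<phi>x = iterpd [True] \<phi>"
  have d0: "\<phi> differentiable_on (interior \<Omega> - slit t)"
    using test unfolding slit_test_def by (metis iterpd.simps(1))
  have d1: "\<phi>x differentiable_on (interior \<Omega> - slit t)"
    using test unfolding slit_test_def \<phi>x_def by blast
  have SI: "S \<subseteq> interior \<Omega> - slit t" using SO OI by blast
  have c1: "continuous_on S \<phi>"
    by (rule continuous_on_subset[OF differentiable_imp_continuous_on[OF d0] SI])
  have c2: "continuous_on S \<phi>x"
    by (rule continuous_on_subset[OF differentiable_imp_continuous_on[OF d1] SI])
  have der: "((\<lambda>s. \<phi> (s, y)) has_real_derivative \<phi>x (x, y)) (at x)"
    if "x \<in> {-a..a}" "y \<in> {-r..r} - {0}" for x y
  proof -
    have xyO: "(x, y) \<in> Wo" using that SO unfolding S_def by blast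
    have "\<phi> differentiable_on Wo" using d0 OI by (rule differentiable_on_subset)
    then have "\<phi> differentiable (at (x, y))"
      using differentiable_on_eq_differentiable_at[OF Oo] xyO by blast
    then show ?thesis unfolding \<phi>x_def by (rule partial_x)
  qed
  have core: "(\<integral>\<^sup>+ z. ennreal (indicator Q z * (\<phi> z)\<^sup>2) \<partial>lborel)
     \<le> ennreal (3 * b / a) * (\<integral>\<^sup>+ z. ennreal (indicator S z * (\<phi> z)\<^sup>2) \<partial>lborel)
       + ennreal (2 * a * b) * (\<integral>\<^sup>+ z. ennreal (indicator S z * (\<phi>x z)\<^sup>2) \<partial>lborel)"
    unfolding S_def Q_def
    by (rule core2d[OF a c1[unfolded S_def] c2[unfolded S_def] der])
  have QS: "Q \<subseteq> S" using a unfolding Q_def S_def by auto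
  have QOm: "Q \<subseteq> \<Omega>" using QS SOm by blast
  have nA: "0 \<le> A" unfolding A_def by (rule lint_nonneg) simp
  have nG: "0 \<le> \<Gamma>" unfolding \<Gamma>_def by (rule lint_nonneg) simp
  have nd: "0 \<le> \<delta>" unfolding \<delta>_def by (rule lint_nonneg) simp
  have ng: "0 \<le> \<gamma>" unfolding \<gamma>_def by (rule lint_nonneg) simp
  have eA: "(\<integral>\<^sup>+z. ennreal (indicator \<Omega> z * (u z)\<^sup>2) \<partial>lebesgue) = ennreal A"
    unfolding A_def by (rule set_nn[OF iu]) simp
  have eG: "(\<integral>\<^sup>+z. ennreal (indicator \<Omega> z * (norm (G z))\<^sup>2) \<partial>lebesgue) = ennreal \<Gamma>"
    unfolding \<Gamma>_def by (rule set_nn[OF iG]) simp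
  have ed: "(\<integral>\<^sup>+z. ennreal (indicator \<Omega> z * (\<phi> z - u z)\<^sup>2) \<partial>lebesgue) = ennreal \<delta>"
    unfolding \<delta>_def by (rule set_nn[OF id]) simp
  have eg: "(\<integral>\<^sup>+z. ennreal (indicator \<Omega> z * (norm (grad \<phi> z - G z))\<^sup>2) \<partial>lebesgue) = ennreal \<gamma>"
    unfolding \<gamma>_def by (rule set_nn[OF ig]) simp
  have mA: "(\<lambda>z. ennreal (indicator \<Omega> z * (u z)\<^sup>2)) \<in> borel_measurable lebesgue" by (rule set_meas[OF iu])
  have mG: "(\<lambda>z. ennreal (indicator \<Omega> z * (norm (G z))\<^sup>2)) \<in> borel_measurable lebesgue" by (rule set_meas[OF iG])
  have md: "(\<lambda>z. ennreal (indicator \<Omega> z * (\<phi> z - u z)\<^sup>2)) \<in> borel_measurable lebesgue" by (rule set_meas[OF id])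
  have mg: "(\<lambda>z. ennreal (indicator \<Omega> z * (norm (grad \<phi> z - G z))\<^sup>2)) \<in> borel_measurable lebesgue" by (rule set_meas[OF ig])
  have mQ: "(\<lambda>z. ennreal (indicator Q z * (\<phi> z)\<^sup>2)) \<in> borel_measurable lebesgue"
  proof -
    have "(\<lambda>z. ennreal (indicator Q z * (\<phi> z)\<^sup>2)) \<in> borel_measurable borel"
      unfolding Q_def by (rule meas_ind_cont[OF strip_borel])
        (intro continuous_intros continuous_on_subset[OF c1 QS[unfolded Q_def]])
    then show ?thesis by (intro measurable_completion) simp
  qed
  have s1: "(\<integral>\<^sup>+z. ennreal (indicator Q z * (u z)\<^sup>2) \<partial>lebesgue)
      \<le> 2 * (\<integral>\<^sup>+z. ennreal (indicator Q z * (\<phi> z)\<^sup>2) \<partial>lebesgue) + 2 * ennreal \<delta>"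
  proof -
    have "(\<integral>\<^sup>+z. ennreal (indicator Q z * (u z)\<^sup>2) \<partial>lebesgue)
      \<le> (\<integral>\<^sup>+z. 2 * ennreal (indicator Q z * (\<phi> z)\<^sup>2) + 2 * ennreal (indicator \<Omega> z * (\<phi> z - u z)\<^sup>2) \<partial>lebesgue)"
    proof (intro nn_integral_mono)
      fix z
      show "ennreal (indicator Q z * (u z)\<^sup>2) \<le> 2 * ennreal (indicator Q z * (\<phi> z)\<^sup>2) + 2 * ennreal (indicator \<Omega> z * (\<phi> z - u z)\<^sup>2)"
      proof (cases "z \<in> Q")
        case True
        then have "z \<in> \<Omega>" using QOm by blast
        have "(u z)\<^sup>2 \<le> 2 * (\<phi> z)\<^sup>2 + 2 * (u z - \<phi> z)\<^sup>2" by (rule sq2)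
        then have "(u z)\<^sup>2 \<le> 2 * (\<phi> z)\<^sup>2 + 2 * (\<phi> z - u z)\<^sup>2" by (simp add: power2_commute)
        then show ?thesis using True \<open>z \<in> \<Omega>\<close> by (intro ennr_le2) auto
      qed simp
    qed
    also have "\<dots> = 2 * (\<integral>\<^sup>+z. ennreal (indicator Q z * (\<phi> z)\<^sup>2) \<partial>lebesgue) + 2 * ennreal \<delta>"
      using mQ md by (subst nn_integral_add) (auto simp: nn_integral_cmult ed)
    finally show ?thesis .
  qed
  have s3: "(\<integral>\<^sup>+z. ennreal (indicator S z * (\<phi> z)\<^sup>2) \<partial>lborel) \<le> 2 * ennreal A + 2 * ennreal \<delta>"
  proof -
    have "(\<integral>\<^sup>+z. ennreal (indicator S z * (\<phi> z)\<^sup>2) \<partial>lborel) = (\<integral>\<^sup>+z. ennreal (indicator S z * (\<phi> z)\<^sup>2) \<partial>lebesgue)"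
      by (simp add: nn_integral_completion)
    also have "\<dots> \<le> (\<integral>\<^sup>+z. 2 * ennreal (indicator \<Omega> z * (u z)\<^sup>2) + 2 * ennreal (indicator \<Omega> z * (\<phi> z - u z)\<^sup>2) \<partial>lebesgue)"
    proof (intro nn_integral_mono)
      fix z
      show "ennreal (indicator S z * (\<phi> z)\<^sup>2) \<le> 2 * ennreal (indicator \<Omega> z * (u z)\<^sup>2) + 2 * ennreal (indicator \<Omega> z * (\<phi> z - u z)\<^sup>2)"
      proof (cases "z \<in> S")
        case True
        then have "z \<in> \<Omega>" using SOm by blast
        have "(\<phi> z)\<^sup>2 \<le> 2 * (u z)\<^sup>2 + 2 * (\<phi> z - u z)\<^sup>2" by (rule sq2)
        then show ?thesis using True \<open>z \<in> \<Omega>\<close> by (intro ennr_le2) auto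
      qed simp
    qed
    also have "\<dots> = 2 * ennreal A + 2 * ennreal \<delta>"
      using mA md by (subst nn_integral_add) (auto simp: nn_integral_cmult ed eA)
    finally show ?thesis .
  qed
  have s4: "(\<integral>\<^sup>+z. ennreal (indicator S z * (\<phi>x z)\<^sup>2) \<partial>lborel) \<le> 2 * ennreal \<Gamma> + 2 * ennreal \<gamma>"
  proof -
    have "(\<integral>\<^sup>+z. ennreal (indicator S z * (\<phi>x z)\<^sup>2) \<partial>lborel) = (\<integral>\<^sup>+z. ennreal (indicator S z * (\<phi>x z)\<^sup>2) \<partial>lebesgue)"
      by (simp add: nn_integral_completion)
    also have "\<dots> \<le> (\<integral>\<^sup>+z. 2 * ennreal (indicator \<Omega> z * (norm (G z))\<^sup>2) + 2 * ennreal (indicator \<Omega> z * (norm (grad \<phi> z - G z))\<^sup>2) \<partial>lebesgue)"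
    proof (intro nn_integral_mono)
      fix z
      show "ennreal (indicator S z * (\<phi>x z)\<^sup>2) \<le> 2 * ennreal (indicator \<Omega> z * (norm (G z))\<^sup>2) + 2 * ennreal (indicator \<Omega> z * (norm (grad \<phi> z - G z))\<^sup>2)"
      proof (cases "z \<in> S")
        case True
        then have "z \<in> \<Omega>" using SOm by blast
        have "\<phi>x z = fst (grad \<phi> z)" by (simp add: \<phi>x_def grad_def)
        then have "(\<phi>x z)\<^sup>2 \<le> 2 * (norm (G z))\<^sup>2 + 2 * (norm (grad \<phi> z - G z))\<^sup>2"
          using fst_sq_le by simp
        then show ?thesis using True \<open>z \<in> \<Omega>\<close> by (intro ennr_le2) auto
      qed simp
    qed
    also have "\<dots> = 2 * ennreal \<Gamma> + 2 * ennreal \<gamma>"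
      using mG mg by (subst nn_integral_add) (auto simp: nn_integral_cmult eG eg)
    finally show ?thesis .
  qed
  have eQ: "(\<integral>\<^sup>+z. ennreal (indicator Q z * (\<phi> z)\<^sup>2) \<partial>lebesgue) = (\<integral>\<^sup>+ z. ennreal (indicator Q z * (\<phi> z)\<^sup>2) \<partial>lborel)"
    by (simp add: nn_integral_completion)
  have nc: "0 \<le> 3 * b / a" "0 \<le> 2 * a * b" using a by auto
  have "(\<integral>\<^sup>+z. ennreal (indicator Q z * (u z)\<^sup>2) \<partial>lebesgue)
      \<le> 2 * (ennreal (3 * b / a) * (2 * ennreal A + 2 * ennreal \<delta>) + ennreal (2 * a * b) * (2 * ennreal \<Gamma> + 2 * ennreal \<gamma>)) + 2 * ennreal \<delta>"
  proof -
    have "2 * (\<integral>\<^sup>+z. ennreal (indicator Q z * (\<phi> z)\<^sup>2) \<partial>lebesgue)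
       \<le> 2 * (ennreal (3 * b / a) * (2 * ennreal A + 2 * ennreal \<delta>) + ennreal (2 * a * b) * (2 * ennreal \<Gamma> + 2 * ennreal \<gamma>))"
      unfolding eQ
      by (intro mult_left_mono order_trans[OF core] add_mono s3 s4) auto
    then show ?thesis using s1 by (meson add_mono order_refl order_trans)
  qed
  also have "\<dots> = ennreal (2 * (3 * b / a * (2 * A + 2 * \<delta>) + 2 * a * b * (2 * \<Gamma> + 2 * \<gamma>)) + 2 * \<delta>)"
    by (rule ennr_combine[OF nc nA nd nG ng])
  finally show ?thesis .
qed



lemma main_est:
  fixes \<Omega> :: "(real \<times> real) set" and u :: "real \<times> real \<Rightarrow> real"
    and G :: "real \<times> real \<Rightarrow> real \<times> real" and a e r t E E0 :: real
  assumes e: "e > 0" "ball 0 e \<subseteq> \<Omega>" and ae: "a = e / 2"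
    and r: "0 < r" "r \<le> a / 2" and t: "0 < t" "t < r"
    and eig: "is_eigenfunction \<Omega> t D u G E" and EE: "E \<le> E0"
  shows "(LINT x:(ell_nbhd t r \<inter> \<Omega>)|lebesgue. (u x)\<^sup>2)
           \<le> r * (24 / a + 16 * a * E0) * (LINT x:\<Omega>|lebesgue. (u x)\<^sup>2)"
proof -
  define b where "b = 2 * r"
  define S where "S = {-a..a} \<times> ({-r..r} - {0::real})"
  define Q where "Q = {-b..b} \<times> ({-r..r} - {0::real})"
  define Wo where "Wo = ball (0::real \<times> real) e - UNIV \<times> {0}"
  define A where "A = (LINT x:\<Omega>|lebesgue. (u x)\<^sup>2)"
  define \<Gamma> where "\<Gamma> = (LINT x:\<Omega>|lebesgue. (norm (G x))\<^sup>2)"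
  have a: "a > 0" "0 < b" "b \<le> a" using e ae r by (auto simp: b_def)
  have Wopen: "open Wo" unfolding Wo_def by (intro open_Diff closed_Times) auto
  have SW: "S \<subseteq> Wo"
  proof
    fix z assume z: "z \<in> S"
    obtain x y where xy: "z = (x, y)" by (cases z)
    have x: "\<bar>x\<bar> \<le> a" and y: "\<bar>y\<bar> \<le> a" "y \<noteq> 0" using z r unfolding xy S_def by auto
    have "x\<^sup>2 \<le> a\<^sup>2" using x by (metis abs_le_square_iff abs_of_pos a(1))
    moreover have "y\<^sup>2 \<le> a\<^sup>2" using y by (metis abs_le_square_iff abs_of_pos a(1))
    moreover have "e\<^sup>2 = 4 * a\<^sup>2"
    proof -
      have "e = 2 * a" using ae by simp
      then show ?thesis by (simp add: power_mult_distrib)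
    qed
    moreover have "0 < a\<^sup>2" using a by simp
    ultimately have "x\<^sup>2 + y\<^sup>2 < e\<^sup>2" by linarith
    then have "sqrt (x\<^sup>2 + y\<^sup>2) < sqrt (e\<^sup>2)" by (rule real_sqrt_less_mono)
    then have "norm z < e" using e by (simp add: xy norm_Pair)
    then show "z \<in> Wo" using y unfolding Wo_def xy by (simp add: dist_0_norm)
  qed
  have ballI: "ball 0 e \<subseteq> interior \<Omega>" using e by (intro interior_maximal) auto
  have WI: "Wo \<subseteq> interior \<Omega> - slit t" using ballI unfolding Wo_def slit_def by auto
  have SOm: "S \<subseteq> \<Omega>" using SW e unfolding Wo_def by auto
  have H: "(u, G) \<in> H1D \<Omega> t D" using eig by (simp add: is_eigenfunction_def)
  then have iu: "set_integrable lebesgue \<Omega> (\<lambda>x. (u x)\<^sup>2)"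
    and iG: "set_integrable lebesgue \<Omega> (\<lambda>x. (norm (G x))\<^sup>2)"
    by (auto simp: H1D_def)
  from H obtain \<phi> where ph: "\<forall>n. slit_test \<Omega> t D (\<phi> n)"
    and phi: "\<forall>n. set_integrable lebesgue \<Omega> (\<lambda>x. (\<phi> n x - u x)\<^sup>2) \<and>
             set_integrable lebesgue \<Omega> (\<lambda>x. (norm (grad (\<phi> n) x - G x))\<^sup>2)"
    and l1: "(\<lambda>n. LINT x:\<Omega>|lebesgue. (\<phi> n x - u x)\<^sup>2) \<longlonglongrightarrow> 0"
    and l2: "(\<lambda>n. LINT x:\<Omega>|lebesgue. (norm (grad (\<phi> n) x - G x))\<^sup>2) \<longlonglongrightarrow> 0"
    unfolding H1D_def by blast
  define \<delta> where "\<delta> n = (LINT x:\<Omega>|lebesgue. (\<phi> n x - u x)\<^sup>2)" for n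
  define \<gamma> where "\<gamma> n = (LINT x:\<Omega>|lebesgue. (norm (grad (\<phi> n) x - G x))\<^sup>2)" for n
  define F where "F n = 2 * (3 * b / a * (2 * A + 2 * \<delta> n) + 2 * a * b * (2 * \<Gamma> + 2 * \<gamma> n)) + 2 * \<delta> n" for n
  define NQ where "NQ = (\<integral>\<^sup>+z. ennreal (indicator Q z * (u z)\<^sup>2) \<partial>lebesgue)"
  have bound: "NQ \<le> ennreal (F n)" for n
    unfolding NQ_def F_def \<delta>_def \<gamma>_def A_def \<Gamma>_def Q_def
    by (rule step_n[OF a SW[unfolded S_def] Wopen WI SOm[unfolded S_def] ph[rule_format] iu iG
          phi[rule_format, THEN conjunct1] phi[rule_format, THEN conjunct2]])
  have nA: "0 \<le> A" unfolding A_def by (rule lint_nonneg) simp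
  have nG: "0 \<le> \<Gamma>" unfolding \<Gamma>_def by (rule lint_nonneg) simp
  have NQfin: "NQ \<noteq> \<infinity>" using bound[of 0] by (auto simp: top_unique)
  define X where "X = enn2real NQ"
  have NQX: "NQ = ennreal X" unfolding X_def using NQfin by (simp add: ennreal_enn2real_if)
  have Fn: "0 \<le> F n" for n
  proof -
    have "0 \<le> \<delta> n" unfolding \<delta>_def by (rule lint_nonneg) simp
    moreover have "0 \<le> \<gamma> n" unfolding \<gamma>_def by (rule lint_nonneg) simp
    ultimately show ?thesis using nA nG a unfolding F_def by simp
  qed
  have XF: "X \<le> F n" for n
    using bound[of n] Fn[of n] unfolding NQX by (simp add: ennreal_le_iff)
  have Flim: "F \<longlonglongrightarrow> 2 * (3 * b / a * (2 * A + 2 * 0) + 2 * a * b * (2 * \<Gamma> + 2 * 0)) + 2 * 0"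
    unfolding F_def
    by (intro tendsto_intros l1[folded \<delta>_def] l2[folded \<gamma>_def])
  have X1: "X \<le> 2 * (3 * b / a * (2 * A + 2 * 0) + 2 * a * b * (2 * \<Gamma> + 2 * 0)) + 2 * 0"
    by (rule LIMSEQ_le_const[OF Flim]) (use XF in auto)
  have "(LINT x:\<Omega>|lebesgue. G x \<bullet> G x) = E * (LINT x:\<Omega>|lebesgue. u x * u x)"
    using eig H unfolding is_eigenfunction_def by blast
  then have GE: "\<Gamma> = E * A"
  proof -
    have f1: "(\<lambda>x. (norm (G x))\<^sup>2) = (\<lambda>x. G x \<bullet> G x)" by (rule ext) (rule power2_norm_eq_inner)
    have f2: "(\<lambda>x. (u x)\<^sup>2) = (\<lambda>x. u x * u x)" by (rule ext) (rule power2_eq_square)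
    assume "(LINT x:\<Omega>|lebesgue. G x \<bullet> G x) = E * (LINT x:\<Omega>|lebesgue. u x * u x)"
    then show ?thesis unfolding \<Gamma>_def A_def f1 f2 .
  qed
  have "\<Gamma> \<le> E0 * A" unfolding GE using EE nA by (rule mult_right_mono)
  then have X2: "X \<le> r * (24 / a + 16 * a * E0) * A"
  proof -
    assume h: "\<Gamma> \<le> E0 * A"
    have "2 * (3 * b / a * (2 * A + 2 * 0) + 2 * a * b * (2 * \<Gamma> + 2 * 0)) + 2 * 0
        = r * (24 / a) * A + 16 * a * r * \<Gamma>"
      using a by (simp add: b_def field_simps)
    also have "\<dots> \<le> r * (24 / a) * A + 16 * a * r * (E0 * A)"
      using h a r by (intro add_left_mono mult_left_mono) auto
    also have "\<dots> = r * (24 / a + 16 * a * E0) * A" by (simp add: algebra_simps)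
    finally show ?thesis using X1 by linarith
  qed
  define W where "W = ell_nbhd t r \<inter> \<Omega>"
  have NW: "(\<integral>\<^sup>+z. ennreal (indicator W z * (u z)\<^sup>2) \<partial>lebesgue) \<le> NQ"
    unfolding NQ_def
  proof (rule nn_integral_mono_AE)
    show "AE z in lebesgue. ennreal (indicator W z * (u z)\<^sup>2) \<le> ennreal (indicator Q z * (u z)\<^sup>2)"
      using AE_not_in[OF axis_null]
    proof eventually_elim
      case (elim z)
      show ?case
      proof (cases "z \<in> W")
        case True
        then have "\<bar>fst z\<bar> \<le> 2 * r \<and> \<bar>snd z\<bar> \<le> r"
          using t by (intro ell_bound) (auto simp: W_def)
        then have "z \<in> Q" using elim unfolding Q_def b_def by (cases z) auto
        then show ?thesis using True by simp
      qed simp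
    qed
  qed
  have fin: "(LINT x:W|lebesgue. (u x)\<^sup>2) \<le> r * (24 / a + 16 * a * E0) * A"
  proof (cases "set_integrable lebesgue W (\<lambda>x. (u x)\<^sup>2)")
    case True
    have "ennreal (LINT x:W|lebesgue. (u x)\<^sup>2) = (\<integral>\<^sup>+z. ennreal (indicator W z * (u z)\<^sup>2) \<partial>lebesgue)"
      by (rule set_nn[OF True, symmetric]) simp
    also have "\<dots> \<le> ennreal (r * (24 / a + 16 * a * E0) * A)"
      using NW X2 unfolding NQX by (meson ennreal_leI order_trans)
    finally show ?thesis
      using nA a r \<open>\<Gamma> \<le> E0 * A\<close>
      by (subst (asm) ennreal_le_iff) (auto intro: order_trans[OF _ X2] simp: X_def)
  next
    case False
    then have "(LINT x:W|lebesgue. (u x)\<^sup>2) = 0"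
      by (simp add: set_integrable_def set_lebesgue_integral_def not_integrable_integral_eq)
    moreover have "0 \<le> X" unfolding X_def by simp
    ultimately show ?thesis using X2 by linarith
  qed
  then show ?thesis unfolding W_def A_def .
qed



theorem lemma3p2:
  fixes \<Omega> :: "(real \<times> real) set"
    and D :: "real \<Rightarrow> (nat \<Rightarrow> real \<times> real) set set"
    and \<epsilon> E0 :: real
  assumes "compact_domain \<Omega>" and "lipschitz_boundary \<Omega>"
    and "\<exists>e>0. ball 0 e \<subseteq> \<Omega>"
    and "\<forall>t>0. D t \<subseteq> slit_boundary \<Omega> t \<and> boundary_measurable \<Omega> t (D t)"
    and "\<epsilon> > 0" and "E0 > 0"
  shows "\<exists>r>0. \<forall>t. 0 < t \<and> t < r \<longrightarrow>
           (\<forall>u G E. is_eigenfunction \<Omega> t (D t) u G E \<and> E \<le> E0 \<longrightarrow>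
              (LINT x:(ell_nbhd t r \<inter> \<Omega>)|lebesgue. (u x)\<^sup>2)
                \<le> \<epsilon> * (LINT x:\<Omega>|lebesgue. (u x)\<^sup>2))"
proof -
  obtain e where e: "e > 0" "ball 0 e \<subseteq> \<Omega>" using assms(3) by blast
  define a where "a = e / 2"
  define K where "K = 24 / a + 16 * a * E0"
  have a: "a > 0" using e by (simp add: a_def)
  have K: "K > 0" using a assms(6) by (simp add: K_def add_pos_pos)
  define r where "r = min (a / 2) (\<epsilon> / K)"
  have r: "r > 0" using a K assms(5) by (simp add: r_def)
  have rK: "r * K \<le> \<epsilon>"
  proof -
    have "r \<le> \<epsilon> / K" by (simp add: r_def)
    then have "r * K \<le> \<epsilon> / K * K" using K by (intro mult_right_mono) auto
    then show ?thesis using K by simp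
  qed
  have ra: "r \<le> a / 2" unfolding r_def by (rule min.cobounded1)
  show ?thesis
  proof (intro exI[of _ r] conjI allI impI)
    show "r > 0" by (rule r)
    fix t u G E
    assume t: "0 < t \<and> t < r" and ue: "is_eigenfunction \<Omega> t (D t) u G E \<and> E \<le> E0"
    have "(LINT x:(ell_nbhd t r \<inter> \<Omega>)|lebesgue. (u x)\<^sup>2) \<le> r * K * (LINT x:\<Omega>|lebesgue. (u x)\<^sup>2)"
      unfolding K_def
      by (rule main_est[OF e a_def r _ _ _ ue[THEN conjunct1] ue[THEN conjunct2]])
        (use t ra in auto)
    also have "\<dots> \<le> \<epsilon> * (LINT x:\<Omega>|lebesgue. (u x)\<^sup>2)"
      by (intro mult_right_mono rK lint_nonneg) simp
    finally show "(LINT x:(ell_nbhd t r \<inter> \<Omega>)|lebesgue. (u x)\<^sup>2) \<le> \<epsilon> * (LINT x:\<Omega>|lebesgue. (u x)\<^sup>2)" .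
  qed
qed

end
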